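(* Let $c_1 > 0$ be a real number, let $k \ge 2$ be an integer, and let $G$ be a finite simple graph with $\mathrm{mad}(G) < c_1 + k$. Then there exists a partition $V(G) = A \uplus B$ such that $\mathrm{mad}(G[A]) < c_1$ and $\mathrm{mad}(G[B]) < 2k - 2$.
   Context: $\mathrm{mad}(G) := \max_{H \subseteq G,\, V(H)\neq\emptyset} \frac{2|E(H)|}{|V(H)|}$ (maximum average degree over nonempty subgraphs); by convention the graph with empty vertex set has $\mathrm{mad} = -\infty$. *)

theory Defs
  imports "HOL-Analysis.Analysis" "HOL-Library.Extended_Real"
begin

definition simple_graph :: "'a set \<Rightarrow> 'a set set \<Rightarrow> bool" where
  "simple_graph V E \<longleftrightarrow> finite V \<and> (\<forall>e\<in>E. e \<subseteq> V \<and> card e = 2)"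

definition induced_edges :: "'a set set \<Rightarrow> 'a set \<Rightarrow> 'a set set" where
  "induced_edges E S = {e \<in> E. e \<subseteq> S}"

definition is_subgraph :: "'a set \<Rightarrow> 'a set set \<Rightarrow> 'a set \<Rightarrow> 'a set set \<Rightarrow> bool" where
  "is_subgraph W F V E \<longleftrightarrow> W \<subseteq> V \<and> F \<subseteq> E \<and> (\<forall>e\<in>F. e \<subseteq> W)"

text \<open>Maximum average degree, over nonempty subgraphs; the supremum of the
  empty set in ereal is -\<infinity>, matching the convention for the empty graph.\<close>
definition mad :: "'a set \<Rightarrow> 'a set set \<Rightarrow> ereal" where
  "mad V E = (SUP H \<in> {(W, F). is_subgraph W F V E \<and> W \<noteq> {}}.
                 ereal (2 * real (card (snd H)) / real (card (fst H))))"

end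

theory Submission
  imports Defs
begin


definition P :: "'a set set \<Rightarrow> 'a set \<Rightarrow> nat" where
  "P E X = card (SIGMA x:X. {u\<in>X. {u,x}\<in>E})"

definition dg :: "'a set set \<Rightarrow> 'a set \<Rightarrow> 'a \<Rightarrow> nat" where
  "dg E Y z = card {u\<in>Y. {u,z}\<in>E}"

lemma P_sum: "finite X \<Longrightarrow> P E X = (\<Sum>x\<in>X. dg E X x)"
  unfolding P_def dg_def by (simp add: card_SigmaI)

lemma edge_ne: assumes "\<forall>e\<in>E. card e = 2" "{u,v}\<in>E" shows "u \<noteq> v"
  using assms by fastforce

lemma P_remove:
  assumes E2: "\<forall>e\<in>E. card e = 2" and fin: "finite Y" and z: "z \<in> Y"
  shows "P E Y = P E (Y - {z}) + 2 * dg E Y z"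
proof -
  have nz: "{z,z} \<notin> E" using E2 by fastforce
  have "P E Y = dg E Y z + (\<Sum>x\<in>Y-{z}. dg E Y x)"
    using fin z by (simp add: P_sum sum.remove)
  also have "(\<Sum>x\<in>Y-{z}. dg E Y x) = (\<Sum>x\<in>Y-{z}. dg E (Y-{z}) x + (if {z,x}\<in>E then 1 else 0))"
  proof (rule sum.cong)
    fix x assume x: "x \<in> Y - {z}"
    have "{u\<in>Y. {u,x}\<in>E} = {u\<in>Y-{z}. {u,x}\<in>E} \<union> (if {z,x}\<in>E then {z} else {})"
      using z by auto
    moreover have "z \<notin> {u\<in>Y-{z}. {u,x}\<in>E}" by auto
    ultimately show "dg E Y x = dg E (Y-{z}) x + (if {z,x}\<in>E then 1 else 0)"
      unfolding dg_def using fin by (auto simp: card_insert_if)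
  qed simp
  also have "\<dots> = P E (Y-{z}) + card {x\<in>Y-{z}. {z,x}\<in>E}"
    using fin by (simp add: sum.distrib P_sum sum.If_cases Int_def conj_commute)
  also have "card {x\<in>Y-{z}. {z,x}\<in>E} = dg E Y z"
  proof -
    have "{x\<in>Y-{z}. {z,x}\<in>E} = {u\<in>Y. {u,z}\<in>E}" using nz by (auto simp: insert_commute)
    thus ?thesis by (simp add: dg_def)
  qed
  finally show ?thesis by simp
qed

lemma degen_P:
  fixes d :: nat
  assumes E2: "\<forall>e\<in>E. card e = 2" and fin: "finite B"
    and deg: "\<forall>Y\<subseteq>B. Y \<noteq> {} \<longrightarrow> (\<exists>z\<in>Y. dg E Y z \<le> d)"
  shows "Y \<subseteq> B \<Longrightarrow> Y \<noteq> {} \<Longrightarrow> P E Y \<le> 2 * d * (card Y - 1)"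
proof (induction "card Y" arbitrary: Y)
  case 0
  then show ?case using fin finite_subset by fastforce
next
  case (Suc n)
  then obtain z where z: "z \<in> Y" "dg E Y z \<le> d" using deg by blast
  have fY: "finite Y" using Suc.prems fin finite_subset by blast
  have eq: "P E Y = P E (Y - {z}) + 2 * dg E Y z" using P_remove[OF E2 fY z(1)] .
  show ?case
  proof (cases "Y - {z} = {}")
    case True
    hence "Y = {z}" using z by auto
    hence "P E Y = 0" unfolding P_def using E2 by fastforce
    thus ?thesis by simp
  next
    case False
    have "Y - {z} \<subseteq> B" using Suc.prems by auto
    moreover have "n = card (Y - {z})" using Suc.hyps(2) z fY by simp
    ultimately have "P E (Y - {z}) \<le> 2 * d * (card (Y - {z}) - 1)"
      using Suc.hyps(1)[of "Y - {z}"] False by blast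
    moreover have "card (Y - {z}) = card Y - 1" using z fY by simp
    moreover have "card Y \<ge> 2"
    proof -
      obtain w where "w \<in> Y" "w \<noteq> z" using False by auto
      hence "{z,w} \<subseteq> Y" using z by auto
      hence "card {z,w} \<le> card Y" using fY card_mono by blast
      thus ?thesis using \<open>w \<noteq> z\<close> by simp
    qed
    ultimately obtain m where m: "card Y = Suc (Suc m)" "P E (Y - {z}) \<le> 2 * d * m"
      by (metis Suc_diff_Suc diff_Suc_1 le_iff_add numeral_2_eq_2 plus_nat.simps(2))
    have "P E Y \<le> 2 * d * m + 2 * d" using eq z(2) m(2) by linarith
    also have "\<dots> = 2 * d * (card Y - 1)" using m(1) by (simp add: algebra_simps)
    finally show ?thesis .
  qed
qed



definition orient :: "'a set set \<Rightarrow> int \<Rightarrow> ('a \<Rightarrow> 'a \<Rightarrow> int) \<Rightarrow> bool" where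
  "orient E N y \<longleftrightarrow> (\<forall>u v. {u,v} \<notin> E \<longrightarrow> y u v = 0) \<and>
     (\<forall>u v. {u,v} \<in> E \<longrightarrow> 0 \<le> y u v \<and> y u v + y v u = N)"

definition load :: "('a \<Rightarrow> 'a \<Rightarrow> int) \<Rightarrow> 'a set \<Rightarrow> 'a \<Rightarrow> int" where
  "load y S x = (\<Sum>u\<in>S. y u x)"

lemma orient_nonneg: "orient E N y \<Longrightarrow> 0 \<le> y u v"
  unfolding orient_def by (cases "{u,v} \<in> E") auto

lemma orient_pair: "orient E N y \<Longrightarrow> y u x + y x u = (if {u,x} \<in> E then N else 0)"
  unfolding orient_def by (auto simp: insert_commute)

lemma load_mono: "orient E N y \<Longrightarrow> finite S \<Longrightarrow> X \<subseteq> S \<Longrightarrow> load y X x \<le> load y S x"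
  unfolding load_def by (rule sum_mono2) (auto intro: orient_nonneg)

lemma load_sum:
  assumes o: "orient E N y" and fin: "finite X"
  shows "2 * (\<Sum>x\<in>X. load y X x) = N * int (P E X)"
proof -
  have sw: "(\<Sum>x\<in>X. \<Sum>u\<in>X. y x u) = (\<Sum>x\<in>X. \<Sum>u\<in>X. y u x)"
    by (rule sum.swap)
  have "2 * (\<Sum>x\<in>X. load y X x) = (\<Sum>x\<in>X. \<Sum>u\<in>X. y u x) + (\<Sum>x\<in>X. \<Sum>u\<in>X. y x u)"
    unfolding load_def using sw by simp
  also have "\<dots> = (\<Sum>x\<in>X. \<Sum>u\<in>X. y u x + y x u)" by (simp add: sum.distrib)
  also have "\<dots> = (\<Sum>x\<in>X. \<Sum>u\<in>X. (if {u,x} \<in> E then N else 0))"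
    using orient_pair[OF o] by simp
  also have "\<dots> = (\<Sum>x\<in>X. N * int (dg E X x))"
    unfolding dg_def using fin by (simp add: sum.If_cases Int_def mult.commute)
  also have "\<dots> = N * int (P E X)" using fin by (simp add: P_sum sum_distrib_left)
  finally show ?thesis .
qed



lemma greedy:
  fixes y :: "'a \<Rightarrow> 'a \<Rightarrow> int" and N :: int and c :: real
  assumes o: "orient E N y" and Npos: "N > 0" and E2: "\<forall>e\<in>E. card e = 2"
    and src: "\<forall>T. T \<subseteq> V \<longrightarrow> T \<noteq> {} \<longrightarrow> (\<exists>v\<in>T. \<forall>u\<in>T. 2 * y u v \<le> N)"
    and finV: "finite V"
  shows "card {x\<in>S. h x \<ge> 0} = n \<Longrightarrow> S \<subseteq> V \<Longrightarrow> (\<forall>x\<in>S. h x \<ge> -1) \<Longrightarrow>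
    (\<forall>x\<in>S. 2 * real_of_int (load y S x) < real_of_int N * (c + real_of_int (h x) + 1)) \<Longrightarrow>
    \<exists>A\<subseteq>S. (\<forall>X\<subseteq>A. X \<noteq> {} \<longrightarrow> real (P E X) < c * real (card X)) \<and>
          (\<forall>Y\<subseteq>S-A. Y \<noteq> {} \<longrightarrow> (\<exists>z\<in>Y. int (dg E Y z) \<le> h z))"
proof (induction n arbitrary: S h rule: less_induct)
  case (less n)
  show ?case
  proof (cases "n = 0")
  case True
  note z0 = less(2)[unfolded True] less(3) less(4) less(5)
  have finS: "finite S" using z0(2) finV finite_subset by blast
  have hm: "\<forall>x\<in>S. h x = -1" using z0(1,2,3) finS by fastforce
  show ?thesis
  proof (intro exI[of _ S] conjI allI impI)
    fix X assume X: "X \<subseteq> S" "X \<noteq> {}"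
    have finX: "finite X" using X finS finite_subset by blast
    have "real_of_int N * real (P E X) = real_of_int (2 * (\<Sum>x\<in>X. load y X x))"
      using load_sum[OF o finX] by simp
    also have "\<dots> \<le> 2 * (\<Sum>x\<in>X. real_of_int (load y S x))"
      using load_mono[OF o finS X(1)] by (simp add: sum_mono)
    also have "\<dots> = (\<Sum>x\<in>X. 2 * real_of_int (load y S x))" by (simp add: sum_distrib_left)
    also have "\<dots> < (\<Sum>x\<in>X. real_of_int N * c)"
    proof (rule sum_strict_mono)
      fix x assume "x \<in> X"
      thus "2 * real_of_int (load y S x) < real_of_int N * c" using z0(4) hm X by fastforce
    qed (use finX X in auto)
    also have "\<dots> = real_of_int N * (c * real (card X))" by simp
    finally show "real (P E X) < c * real (card X)" using Npos by simp
  qed auto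
next
  case False
  note Suc = less
  have finS: "finite S" using Suc(3) finV finite_subset by blast
  define Q where "Q = {x\<in>S. h x \<ge> 0}"
  have "Q \<noteq> {}" using Suc(2) Q_def False by force
  then obtain v where vQ: "v \<in> Q" and vsrc: "\<forall>u\<in>Q. 2 * y u v \<le> N"
    using src Suc(3) Q_def by (metis (no_types, lifting) mem_Collect_eq subset_iff)
  have vS: "v \<in> S" and hv: "h v \<ge> 0" using vQ Q_def by auto
  define S' where "S' = S - {v}"
  define h' where "h' = (\<lambda>x. if {x,v} \<in> E \<and> h x \<ge> 0 then h x - 1 else h x)"
  have Q': "{x\<in>S'. h' x \<ge> 0} \<subseteq> Q - {v}"
    unfolding S'_def h'_def Q_def by auto
  have "card {x\<in>S'. h' x \<ge> 0} \<le> card (Q - {v})"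
    using Q' finS Q_def by (intro card_mono) auto
  also have "\<dots> < n" using Suc(2) vQ Q_def finS False by (simp add: card_Diff1_less)
  finally have cQ: "card {x\<in>S'. h' x \<ge> 0} < n" .
  have sub': "S' \<subseteq> V" using Suc(3) S'_def by auto
  have hge': "\<forall>x\<in>S'. h' x \<ge> -1" using Suc(4) S'_def h'_def by auto
  have inv': "\<forall>x\<in>S'. 2 * real_of_int (load y S' x) < real_of_int N * (c + real_of_int (h' x) + 1)"
  proof
    fix x assume xS': "x \<in> S'"
    hence xS: "x \<in> S" and xv: "x \<noteq> v" using S'_def by auto
    have ld: "load y S x = load y S' x + y v x"
      unfolding load_def S'_def using finS vS by (simp add: sum.remove)
    have old: "2 * real_of_int (load y S x) < real_of_int N * (c + real_of_int (h x) + 1)"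
      using Suc(5) xS by blast
    show "2 * real_of_int (load y S' x) < real_of_int N * (c + real_of_int (h' x) + 1)"
    proof (cases "{x,v} \<in> E \<and> h x \<ge> 0")
      case True
      hence "x \<in> Q" using xS Q_def by auto
      hence "2 * y x v \<le> N" using vsrc by blast
      moreover have "y x v + y v x = N" using True o unfolding orient_def by blast
      ultimately have "N \<le> 2 * y v x" by linarith
      hence "2 * real_of_int (load y S' x) \<le> 2 * real_of_int (load y S x) - real_of_int N"
        using ld by simp
      also have "\<dots> < real_of_int N * (c + real_of_int (h x) + 1) - real_of_int N"
        using old by simp
      also have "\<dots> = real_of_int N * (c + real_of_int (h' x) + 1)"
        using True by (simp add: h'_def algebra_simps)
      finally show ?thesis .
    next
      case False
      have "0 \<le> y v x" using orient_nonneg[OF o] .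
      hence "2 * real_of_int (load y S' x) \<le> 2 * real_of_int (load y S x)" using ld by simp
      also have "\<dots> < real_of_int N * (c + real_of_int (h' x) + 1)"
        using old False unfolding h'_def by (simp only: if_False if_not_P)
      finally show ?thesis .
    qed
  qed
  obtain A where A: "A \<subseteq> S'" "\<forall>X\<subseteq>A. X \<noteq> {} \<longrightarrow> real (P E X) < c * real (card X)"
    "\<forall>Y\<subseteq>S'-A. Y \<noteq> {} \<longrightarrow> (\<exists>z\<in>Y. int (dg E Y z) \<le> h' z)"
    using less.IH[OF cQ refl sub' hge' inv'] by blast
  show ?thesis
  proof (intro exI[of _ A] conjI)
    show "A \<subseteq> S" using A(1) S'_def by auto
    show "\<forall>X\<subseteq>A. X \<noteq> {} \<longrightarrow> real (P E X) < c * real (card X)" using A(2) .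
    show "\<forall>Y\<subseteq>S-A. Y \<noteq> {} \<longrightarrow> (\<exists>z\<in>Y. int (dg E Y z) \<le> h z)"
    proof (intro allI impI)
      fix Y assume Y: "Y \<subseteq> S - A" "Y \<noteq> {}"
      have finY: "finite Y" using Y finS finite_subset by blast
      show "\<exists>z\<in>Y. int (dg E Y z) \<le> h z"
      proof (cases "Y - {v} = {}")
        case True
        hence "Y = {v}" using Y by auto
        hence "dg E Y v = 0" unfolding dg_def using E2 by fastforce
        thus ?thesis using hv \<open>Y = {v}\<close> by auto
      next
        case False
        have "Y - {v} \<subseteq> S' - A" using Y S'_def by auto
        then obtain z where z: "z \<in> Y - {v}" "int (dg E (Y - {v}) z) \<le> h' z"
          using A(3) False by blast
        have "{u\<in>Y. {u,z}\<in>E} \<subseteq> insert v {u\<in>Y-{v}. {u,z}\<in>E}" by auto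
        hence "dg E Y z \<le> card (insert v {u\<in>Y-{v}. {u,z}\<in>E})"
          unfolding dg_def by (rule card_mono[rotated]) (use finY in auto)
        also have "\<dots> \<le> Suc (dg E (Y - {v}) z)"
          unfolding dg_def using finY by (simp add: card_insert_if)
        finally have le1: "dg E Y z \<le> Suc (dg E (Y - {v}) z)" .
        have eq0: "{x,v} \<notin> E \<Longrightarrow> dg E Y x = dg E (Y - {v}) x" for x
        proof -
          assume "{x,v} \<notin> E"
          hence "{u\<in>Y. {u,x}\<in>E} = {u\<in>Y-{v}. {u,x}\<in>E}" by (auto simp: insert_commute)
          thus ?thesis by (simp add: dg_def)
        qed
        show ?thesis
        proof (cases "{z,v} \<in> E")
          case True
          show ?thesis
          proof (cases "h z \<ge> 0")
            case True
            hence "h' z = h z - 1" using \<open>{z,v} \<in> E\<close> h'_def by simp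
            hence "int (dg E Y z) \<le> h z" using z(2) le1 by linarith
            thus ?thesis using z(1) by blast
          next
            case False
            hence "h' z = h z" using h'_def by simp
            moreover have "h z \<ge> -1" using Suc(4) z Y by auto
            ultimately have "h' z < 0" using False by simp
            thus ?thesis using z(2) by simp
          qed
        next
          case False
          hence "h' z = h z" using h'_def by simp
          thus ?thesis using z eq0[OF False] by (metis DiffD1)
        qed
      qed
    qed
  qed
qed
qed



lemma sum_change1:
  fixes f g :: "'b \<Rightarrow> 'c::ab_group_add"
  assumes "finite A" "u \<in> A" "\<forall>x\<in>A. x \<noteq> u \<longrightarrow> g x = f x"
  shows "sum g A = sum f A + (g u - f u)"
proof -
  have "sum g A = g u + sum g (A - {u})" using assms by (simp add: sum.remove)
  also have "sum g (A - {u}) = sum f (A - {u})" using assms by (intro sum.cong) auto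
  also have "sum f (A - {u}) = sum f A - f u" using assms by (simp add: sum_diff1)
  finally show ?thesis by (simp add: algebra_simps)
qed

lemma sum_change2:
  fixes f g :: "'b \<Rightarrow> 'c::ab_group_add"
  assumes "finite A" "u \<in> A" "v \<in> A" "u \<noteq> v" "\<forall>x\<in>A. x \<noteq> u \<longrightarrow> x \<noteq> v \<longrightarrow> g x = f x"
  shows "sum g A = sum f A + (g u - f u) + (g v - f v)"
proof -
  define k where "k = (\<lambda>x. if x = v then g x else f x)"
  have "sum g A = sum k A + (g u - k u)"
    using assms by (intro sum_change1) (auto simp: k_def)
  moreover have "sum k A = sum f A + (k v - f v)"
    using assms by (intro sum_change1) (auto simp: k_def)
  ultimately show ?thesis using assms by (simp add: k_def)
qed

definition Phi :: "'a set \<Rightarrow> int \<Rightarrow> ('a \<Rightarrow> 'a \<Rightarrow> int) \<Rightarrow> int" where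
  "Phi V h2 y = (\<Sum>x\<in>V. (load y V x)^2) + (\<Sum>a\<in>V. \<Sum>b\<in>V. 2 * \<bar>y a b - h2\<bar>)"

lemma Phi_nonneg: "0 \<le> Phi V h2 y"
  unfolding Phi_def by (intro add_nonneg_nonneg sum_nonneg) auto

lemma move:
  assumes o: "orient E (2*h2) y" and E2: "\<forall>e\<in>E. e \<subseteq> V \<and> card e = 2" and finV: "finite V"
    and uv: "y u v \<ge> 1"
  shows "orient E (2*h2) (\<lambda>a b. if a = u \<and> b = v then y u v - 1 else if a = v \<and> b = u then y v u + 1 else y a b)"
    and "Phi V h2 (\<lambda>a b. if a = u \<and> b = v then y u v - 1 else if a = v \<and> b = u then y v u + 1 else y a b)
         = Phi V h2 y + 2 * load y V u - 2 * load y V v + 2 + 4 * (\<bar>y u v - 1 - h2\<bar> - \<bar>y u v - h2\<bar>)"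
proof -
  define y' where "y' = (\<lambda>a b. if a = u \<and> b = v then y u v - 1 else if a = v \<and> b = u then y v u + 1 else y a b)"
  have e: "{u,v} \<in> E"
  proof (rule ccontr)
    assume "{u,v} \<notin> E"
    hence "y u v = 0" using o unfolding orient_def by blast
    thus False using uv by simp
  qed
  have uvne: "u \<noteq> v"
  proof
    assume "u = v"
    hence "card {u,v} = 1" by simp
    thus False using E2 e by force
  qed
  have uV: "u \<in> V" and vV: "v \<in> V" using E2 e by blast+
  have sumN: "y u v + y v u = 2*h2" using o e unfolding orient_def by blast
  have o1: "\<And>a b. {a,b} \<notin> E \<Longrightarrow> y a b = 0" using o unfolding orient_def by blast
  have o2: "\<And>a b. {a,b} \<in> E \<Longrightarrow> y a b + y b a = 2*h2" using o unfolding orient_def by blast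
  have o3: "\<And>a b. 0 \<le> y a b" using orient_nonneg[OF o] by blast
  have evu: "{v,u} \<in> E" using e by (simp add: insert_commute)
  show "orient E (2*h2) (\<lambda>a b. if a = u \<and> b = v then y u v - 1 else if a = v \<and> b = u then y v u + 1 else y a b)"
    unfolding orient_def
  proof (intro conjI allI impI)
    fix a b assume nab: "{a,b} \<notin> E"
    have "\<not> (a = u \<and> b = v)" using nab e by blast
    moreover have "\<not> (a = v \<and> b = u)" using nab evu by blast
    ultimately show "(if a = u \<and> b = v then y u v - 1 else if a = v \<and> b = u then y v u + 1 else y a b) = 0"
      using o1[OF nab] by (simp only: if_False simp_thms)
  next
    fix a b assume ab: "{a,b} \<in> E"
    show "0 \<le> (if a = u \<and> b = v then y u v - 1 else if a = v \<and> b = u then y v u + 1 else y a b)"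
    proof (cases "a = u \<and> b = v")
      case True
      show ?thesis unfolding if_P[OF True] using uv by linarith
    next
      case F: False
      show ?thesis
      proof (cases "a = v \<and> b = u")
        case True
        show ?thesis unfolding if_not_P[OF F] if_P[OF True] using o3[of v u] by linarith
      next
        case False
        show ?thesis unfolding if_not_P[OF F] if_not_P[OF False] using o3[of a b] .
      qed
    qed
    have "y a b + y b a = 2*h2" using o2[OF ab] .
    thus "(if a = u \<and> b = v then y u v - 1 else if a = v \<and> b = u then y v u + 1 else y a b) +
          (if b = u \<and> a = v then y u v - 1 else if b = v \<and> a = u then y v u + 1 else y b a) = 2*h2"
    proof (cases "a = u \<and> b = v")
      case True
      hence n: "\<not> (b = u \<and> a = v)" and p: "b = v \<and> a = u" using uvne by blast+
      show ?thesis unfolding if_P[OF True] if_not_P[OF n] if_P[OF p] using sumN by simp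
    next
      case F1: False
      show ?thesis
      proof (cases "a = v \<and> b = u")
        case True
        hence p: "b = u \<and> a = v" by blast
        show ?thesis unfolding if_not_P[OF F1] if_P[OF True] if_P[OF p] using sumN by simp
      next
        case False
        have n1: "\<not> (b = u \<and> a = v)" using False by blast
        have n2: "\<not> (b = v \<and> a = u)" using F1 by blast
        show ?thesis unfolding if_not_P[OF F1] if_not_P[OF False] if_not_P[OF n1] if_not_P[OF n2]
          using \<open>y a b + y b a = 2*h2\<close> .
      qed
    qed
  qed
  have Lv: "load y' V v = load y V v - 1"
  proof -
    have h1: "\<forall>x\<in>V. x \<noteq> u \<longrightarrow> y' x v = y x v" using uvne unfolding y'_def by simp
    have h2: "y' u v = y u v - 1" unfolding y'_def by simp
    show ?thesis unfolding load_def using sum_change1[OF finV uV h1] h2 by simp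
  qed
  have Lu: "load y' V u = load y V u + 1"
  proof -
    have h1: "\<forall>x\<in>V. x \<noteq> v \<longrightarrow> y' x u = y x u" using uvne unfolding y'_def by simp
    have h2: "y' v u = y v u + 1" using uvne unfolding y'_def by simp
    show ?thesis unfolding load_def using sum_change1[OF finV vV h1] h2 by simp
  qed
  have Lo: "x \<noteq> u \<Longrightarrow> x \<noteq> v \<Longrightarrow> load y' V x = load y V x" for x
    unfolding load_def y'_def by (intro sum.cong) simp_all
  have S1: "(\<Sum>x\<in>V. (load y' V x)^2) = (\<Sum>x\<in>V. (load y V x)^2)
      + ((load y V u + 1)^2 - (load y V u)^2) + ((load y V v - 1)^2 - (load y V v)^2)"
  proof -
    have hh: "\<forall>x\<in>V. x \<noteq> u \<longrightarrow> x \<noteq> v \<longrightarrow> (load y' V x)^2 = (load y V x)^2" using Lo by simp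
    show ?thesis using sum_change2[OF finV uV vV uvne hh] Lu Lv by simp
  qed
  have inu: "(\<Sum>b\<in>V. 2 * \<bar>y' u b - h2\<bar>) = (\<Sum>b\<in>V. 2 * \<bar>y u b - h2\<bar>) + (2 * \<bar>y u v - 1 - h2\<bar> - 2 * \<bar>y u v - h2\<bar>)"
  proof -
    have hh: "\<forall>b\<in>V. b \<noteq> v \<longrightarrow> 2 * \<bar>y' u b - h2\<bar> = 2 * \<bar>y u b - h2\<bar>" using uvne unfolding y'_def by simp
    have h2: "y' u v = y u v - 1" unfolding y'_def by simp
    show ?thesis using sum_change1[OF finV vV hh] h2 by simp
  qed
  have inv: "(\<Sum>b\<in>V. 2 * \<bar>y' v b - h2\<bar>) = (\<Sum>b\<in>V. 2 * \<bar>y v b - h2\<bar>) + (2 * \<bar>y v u + 1 - h2\<bar> - 2 * \<bar>y v u - h2\<bar>)"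
  proof -
    have hh: "\<forall>b\<in>V. b \<noteq> u \<longrightarrow> 2 * \<bar>y' v b - h2\<bar> = 2 * \<bar>y v b - h2\<bar>" using uvne unfolding y'_def by simp
    have h2: "y' v u = y v u + 1" using uvne unfolding y'_def by simp
    show ?thesis using sum_change1[OF finV uV hh] h2 by simp
  qed
  have ino: "\<forall>a\<in>V. a \<noteq> u \<longrightarrow> a \<noteq> v \<longrightarrow> (\<Sum>b\<in>V. 2 * \<bar>y' a b - h2\<bar>) = (\<Sum>b\<in>V. 2 * \<bar>y a b - h2\<bar>)"
    unfolding y'_def by simp
  have S2: "(\<Sum>a\<in>V. \<Sum>b\<in>V. 2 * \<bar>y' a b - h2\<bar>) = (\<Sum>a\<in>V. \<Sum>b\<in>V. 2 * \<bar>y a b - h2\<bar>)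
      + (2 * \<bar>y u v - 1 - h2\<bar> - 2 * \<bar>y u v - h2\<bar>) + (2 * \<bar>y v u + 1 - h2\<bar> - 2 * \<bar>y v u - h2\<bar>)"
    using sum_change2[OF finV uV vV uvne ino] inu inv by simp
  have a1: "\<bar>y v u + 1 - h2\<bar> = \<bar>y u v - 1 - h2\<bar>" using sumN by linarith
  have a2: "\<bar>y v u - h2\<bar> = \<bar>y u v - h2\<bar>" using sumN by linarith
  have "Phi V h2 y' = Phi V h2 y + 2 * load y V u - 2 * load y V v + 2 + 4 * (\<bar>y u v - 1 - h2\<bar> - \<bar>y u v - h2\<bar>)"
    unfolding Phi_def S1 S2 a1 a2 by (simp add: power2_eq_square algebra_simps)
  thus "Phi V h2 (\<lambda>a b. if a = u \<and> b = v then y u v - 1 else if a = v \<and> b = u then y v u + 1 else y a b)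
         = Phi V h2 y + 2 * load y V u - 2 * load y V v + 2 + 4 * (\<bar>y u v - 1 - h2\<bar> - \<bar>y u v - h2\<bar>)"
    unfolding y'_def .
qed

lemma kkt:
  assumes o: "orient E (2*h2) y" and E2: "\<forall>e\<in>E. e \<subseteq> V \<and> card e = 2" and finV: "finite V"
    and opt: "\<forall>z. orient E (2*h2) z \<longrightarrow> Phi V h2 y \<le> Phi V h2 z"
    and uv: "y u v \<ge> 1"
  shows "load y V v \<le> load y V u + 3" and "y u v \<ge> h2 + 1 \<Longrightarrow> load y V v \<le> load y V u - 1"
proof -
  note m = move[OF o E2 finV uv]
  have "Phi V h2 y \<le> Phi V h2 y + 2 * load y V u - 2 * load y V v + 2 + 4 * (\<bar>y u v - 1 - h2\<bar> - \<bar>y u v - h2\<bar>)"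
    using opt m(1) unfolding m(2)[symmetric] by blast
  hence key: "0 \<le> 2 * load y V u - 2 * load y V v + 2 + 4 * (\<bar>y u v - 1 - h2\<bar> - \<bar>y u v - h2\<bar>)" by simp
  define t where "t = \<bar>y u v - 1 - h2\<bar> - \<bar>y u v - h2\<bar>"
  have key2: "0 \<le> 2 * load y V u - 2 * load y V v + 2 + 4 * t" using key t_def by simp
  have "t \<le> 1" unfolding t_def by linarith
  thus "load y V v \<le> load y V u + 3" using key2 by linarith
  assume "y u v \<ge> h2 + 1"
  hence "t = -1" unfolding t_def by linarith
  thus "load y V v \<le> load y V u - 1" using key2 by linarith
qed



lemma orient_exists:
  fixes M :: real
  assumes finV: "finite V" and E2: "\<forall>e\<in>E. e \<subseteq> V \<and> card e = 2"
    and dens: "\<forall>X\<subseteq>V. X \<noteq> {} \<longrightarrow> real (P E X) < M * real (card X)"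
  shows "\<exists>N y. N > 0 \<and> orient E N y \<and> (\<forall>x\<in>V. 2 * real_of_int (load y V x) < real_of_int N * M)
           \<and> (\<forall>T. T \<subseteq> V \<longrightarrow> T \<noteq> {} \<longrightarrow> (\<exists>v\<in>T. \<forall>u\<in>T. 2 * y u v \<le> N))"
proof (cases "V = {}")
  case True
  have "E = {}"
  proof (rule ccontr)
    assume "E \<noteq> {}"
    then obtain e where "e \<in> E" by blast
    hence "e = {}" "card e = 2" using E2 True by auto
    thus False by simp
  qed
  hence "orient E 2 (\<lambda>u v. 0)" unfolding orient_def by simp
  thus ?thesis using True by (intro exI[of _ 2] exI[of _ "\<lambda>u v. 0"]) auto
next
  case False
  define Xs where "Xs = {X. X \<subseteq> V \<and> X \<noteq> {}}"
  have finXs: "finite Xs" unfolding Xs_def using finV by simp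
  have VXs: "V \<in> Xs" unfolding Xs_def using False by simp
  define g where "g = (\<lambda>X. M - real (P E X) / real (card X))"
  define mu where "mu = Min (g ` Xs)"
  have gpos: "\<forall>X\<in>Xs. g X > 0"
  proof
    fix X assume X: "X \<in> Xs"
    hence "X \<subseteq> V" "X \<noteq> {}" unfolding Xs_def by auto
    hence cp: "real (card X) > 0" using finV finite_subset card_gt_0_iff by fastforce
    have "real (P E X) < M * real (card X)" using dens \<open>X \<subseteq> V\<close> \<open>X \<noteq> {}\<close> by blast
    hence "real (P E X) / real (card X) < M" using cp by (simp add: divide_less_eq)
    thus "g X > 0" unfolding g_def by simp
  qed
  have mupos: "mu > 0"
  proof -
    have "mu \<in> g ` Xs" unfolding mu_def using finXs VXs by (intro Min_in) auto
    thus ?thesis using gpos by auto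
  qed
  have mule: "\<forall>X\<in>Xs. real (P E X) \<le> (M - mu) * real (card X)"
  proof
    fix X assume X: "X \<in> Xs"
    hence "X \<subseteq> V" "X \<noteq> {}" unfolding Xs_def by auto
    hence cp: "real (card X) > 0" using finV finite_subset card_gt_0_iff by fastforce
    have "mu \<le> g X" unfolding mu_def using finXs X by (intro Min_le) auto
    hence "real (P E X) / real (card X) \<le> M - mu" unfolding g_def by simp
    thus "real (P E X) \<le> (M - mu) * real (card X)" using cp by (simp add: divide_le_eq)
  qed
  define n where "n = card V"
  obtain K :: nat where K: "6 * real n / mu < real K" using reals_Archimedean2 by blast
  define h2 :: int where "h2 = int K + 1"
  define N where "N = 2 * h2"
  have h2pos: "h2 \<ge> 1" unfolding h2_def by simp
  have Nmu: "real_of_int N * mu > 6 * real n"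
  proof -
    have "6 * real n < real K * mu" using K mupos by (simp add: divide_less_eq)
    also have "\<dots> \<le> real_of_int N * mu" using mupos unfolding N_def h2_def by simp
    finally show ?thesis .
  qed
  define y0 where "y0 = (\<lambda>u v. if {u,v} \<in> E then h2 else 0)"
  have oy0: "orient E N y0"
    unfolding orient_def y0_def N_def using h2pos by (auto simp: insert_commute)
  obtain y where oy: "orient E N y" and opt0: "\<forall>z. orient E N z \<longrightarrow> nat (Phi V h2 y) \<le> nat (Phi V h2 z)"
    using ex_has_least_nat[of "orient E N" y0 "\<lambda>y. nat (Phi V h2 y)"] oy0 by blast
  have opt: "\<forall>z. orient E (2*h2) z \<longrightarrow> Phi V h2 y \<le> Phi V h2 z"
  proof (intro allI impI)
    fix z assume "orient E (2*h2) z"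
    hence "nat (Phi V h2 y) \<le> nat (Phi V h2 z)" using opt0 N_def by blast
    thus "Phi V h2 y \<le> Phi V h2 z" using Phi_nonneg[of V h2 y] Phi_nonneg[of V h2 z] by linarith
  qed
  have oy2: "orient E (2*h2) y" using oy N_def by simp
  note kk = kkt[OF oy2 E2 finV opt]
  define L where "L = load y V"
  have ynn: "\<And>a b. 0 \<le> y a b" using orient_nonneg[OF oy] by blast
  have src: "\<forall>T. T \<subseteq> V \<longrightarrow> T \<noteq> {} \<longrightarrow> (\<exists>v\<in>T. \<forall>u\<in>T. 2 * y u v \<le> N)"
  proof (intro allI impI)
    fix T assume T: "T \<subseteq> V" "T \<noteq> {}"
    have finT: "finite T" using T finV finite_subset by blast
    define v where "v = (SOME v. v \<in> T \<and> L v = Max (L ` T))"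
    have "Max (L ` T) \<in> L ` T" using finT T by (intro Max_in) auto
    hence "\<exists>v. v \<in> T \<and> L v = Max (L ` T)" by auto
    hence vT: "v \<in> T" and Lv: "L v = Max (L ` T)" unfolding v_def by (metis (mono_tags, lifting) someI_ex)+
    have vmax: "\<forall>u\<in>T. L u \<le> L v" using Lv finT by simp
    show "\<exists>v\<in>T. \<forall>u\<in>T. 2 * y u v \<le> N"
    proof (intro bexI[OF _ vT] ballI)
      fix u assume uT: "u \<in> T"
      show "2 * y u v \<le> N"
      proof (rule ccontr)
        assume "\<not> 2 * y u v \<le> N"
        hence big: "y u v \<ge> h2 + 1" unfolding N_def by linarith
        hence "y u v \<ge> 1" using h2pos by linarith
        hence "L v \<le> L u - 1" using kk(2)[OF _ big] unfolding L_def by blast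
        thus False using vmax uT by force
      qed
    qed
  qed
  define D where "D = Max (L ` V)"
  have "D \<in> L ` V" unfolding D_def using finV False by (intro Max_in) auto
  then obtain x0 where x0: "x0 \<in> V" "L x0 = D" by auto
  have Dge: "\<forall>x\<in>V. L x \<le> D" unfolding D_def using finV by simp
  define blk where "blk = (\<lambda>(j::nat) x. D - 3 * int j - 3 \<le> L x \<and> L x \<le> D - 3 * int j - 1)"
  have "\<exists>j\<le>n. \<forall>x\<in>V. \<not> blk j x"
  proof (rule ccontr)
    assume "\<not> (\<exists>j\<le>n. \<forall>x\<in>V. \<not> blk j x)"
    hence "\<forall>j\<in>{..n}. \<exists>x. x \<in> V \<and> blk j x" by auto
    then obtain f where f: "\<forall>j\<in>{..n}. f j \<in> V \<and> blk j (f j)" by metis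
    have inj: "inj_on f {..n}"
    proof (rule inj_onI)
      fix i j assume ij: "i \<in> {..n}" "j \<in> {..n}" "f i = f j"
      have bi: "blk i (f i)" and bj0: "blk j (f j)" using f ij(1,2) by auto
      have bj: "blk j (f i)" using bj0 ij(3) by simp
      show "i = j"
      proof (rule ccontr)
        assume "i \<noteq> j"
        hence "i < j \<or> j < i" by auto
        thus False
        proof
          assume "i < j"
          hence "int j \<ge> int i + 1" by simp
          thus False using bi bj unfolding blk_def by linarith
        next
          assume "j < i"
          hence "int i \<ge> int j + 1" by simp
          thus False using bi bj unfolding blk_def by linarith
        qed
      qed
    qed
    have sub: "f ` {..n} \<subseteq> V - {x0}"
    proof
      fix z assume "z \<in> f ` {..n}"
      then obtain j where j: "j \<in> {..n}" "z = f j" by auto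
      hence "z \<in> V" "blk j z" using f by auto
      hence "L z < D" unfolding blk_def by linarith
      thus "z \<in> V - {x0}" using \<open>z \<in> V\<close> x0 by auto
    qed
    have "card (f ` {..n}) \<le> card (V - {x0})" using sub finV by (intro card_mono) auto
    moreover have "card (f ` {..n}) = n + 1" using inj by (simp add: card_image)
    moreover have "card (V - {x0}) = n - 1" using x0 finV n_def by simp
    ultimately show False by simp
  qed
  then obtain j where j: "j \<le> n" "\<forall>x\<in>V. \<not> blk j x" by blast
  define th where "th = D - 3 * int j"
  define R where "R = {x\<in>V. th \<le> L x}"
  have x0R: "x0 \<in> R" unfolding R_def th_def using x0 by simp
  have RV: "R \<subseteq> V" unfolding R_def by auto
  have finR: "finite R" using RV finV finite_subset by blast
  have closed: "\<forall>v\<in>R. \<forall>u\<in>V - R. y u v = 0"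
  proof (intro ballI)
    fix v u assume v: "v \<in> R" and u: "u \<in> V - R"
    have "L u < th" using u unfolding R_def by auto
    moreover have "\<not> blk j u" using j u by auto
    ultimately have Lu: "L u \<le> th - 4" unfolding blk_def th_def by linarith
    have Lv: "th \<le> L v" using v unfolding R_def by auto
    show "y u v = 0"
    proof (rule ccontr)
      assume "y u v \<noteq> 0"
      hence "y u v \<ge> 1" using ynn[of u v] by linarith
      hence "L v \<le> L u + 3" using kk(1) unfolding L_def by blast
      thus False using Lu Lv by linarith
    qed
  qed
  have LR: "\<forall>v\<in>R. L v = load y R v"
  proof
    fix v assume v: "v \<in> R"
    have "L v = (\<Sum>u\<in>R. y u v) + (\<Sum>u\<in>V - R. y u v)"
      unfolding L_def load_def using finV RV by (simp add: sum.subset_diff)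
    also have "(\<Sum>u\<in>V - R. y u v) = 0" using closed v by simp
    finally show "L v = load y R v" unfolding load_def by simp
  qed
  have A: "2 * (\<Sum>v\<in>R. load y R v) = N * int (P E R)" using load_sum[OF oy finR] .
  have B: "of_nat (card R) * th \<le> (\<Sum>v\<in>R. load y R v)"
    using LR unfolding R_def by (intro sum_bounded_below) auto
  have RXs: "R \<in> Xs" unfolding Xs_def using RV x0R by auto
  have C: "real (P E R) \<le> (M - mu) * real (card R)" using mule RXs by blast
  have cR: "real (card R) > 0" using finR x0R card_gt_0_iff by fastforce
  have thD: "real_of_int th \<ge> real_of_int D - 3 * real n" unfolding th_def using j by simp
  have "real (card R) * (2 * (real_of_int D - 3 * real n)) \<le> 2 * (real (card R) * real_of_int th)"
    using thD cR by (simp add: mult_left_mono)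
  also have "\<dots> \<le> 2 * real_of_int (\<Sum>v\<in>R. load y R v)"
  proof -
    have "real_of_int (int (card R) * th) \<le> real_of_int (\<Sum>v\<in>R. load y R v)"
      using B by (simp only: of_int_le_iff of_nat_id)
    thus ?thesis by simp
  qed
  also have "\<dots> = real_of_int N * real (P E R)" using arg_cong[OF A, of real_of_int] by simp
  also have "\<dots> \<le> real_of_int N * ((M - mu) * real (card R))"
    using C h2pos unfolding N_def by (intro mult_left_mono) auto
  also have "\<dots> = real (card R) * (real_of_int N * (M - mu))" by (simp add: algebra_simps)
  finally have "2 * (real_of_int D - 3 * real n) \<le> real_of_int N * (M - mu)"
    using cR by (simp add: mult_le_cancel_left_pos)
  hence Dlt: "2 * real_of_int D < real_of_int N * M" using Nmu by (simp add: algebra_simps)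
  have bound: "\<forall>x\<in>V. 2 * real_of_int (load y V x) < real_of_int N * M"
  proof
    fix x assume "x \<in> V"
    hence "L x \<le> D" using Dge by blast
    thus "2 * real_of_int (load y V x) < real_of_int N * M" using Dlt unfolding L_def by linarith
  qed
  show ?thesis using oy bound src h2pos unfolding N_def by (intro exI[of _ N] exI[of _ y]) (auto simp: N_def)
qed



lemma two_set: "card e = 2 \<Longrightarrow> \<exists>p q. p \<noteq> q \<and> e = {p,q}"
  by (metis card_2_iff)

lemma pairs_card: assumes "card e = 2" shows "card {(a,b). a \<in> e \<and> b \<in> e \<and> a \<noteq> b} = 2"
proof -
  obtain p q where pq: "p \<noteq> q" "e = {p,q}" using two_set[OF assms] by blast
  have "{(a,b). a \<in> e \<and> b \<in> e \<and> a \<noteq> b} = {(p,q),(q,p)}" using pq by auto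
  thus ?thesis using pq by simp
qed

lemma handshake:
  assumes fin: "finite X" and E2: "\<forall>e\<in>E. card e = 2"
  shows "P E X = 2 * card (induced_edges E X)"
proof -
  define IE where "IE = induced_edges E X"
  define pr where "pr = (\<lambda>e::'a set. {(a,b). a \<in> e \<and> b \<in> e \<and> a \<noteq> b})"
  have eq: "(SIGMA x:X. {u\<in>X. {u,x}\<in>E}) = (\<Union>e\<in>IE. pr e)"
  proof (intro equalityI subsetI)
    fix z assume "z \<in> (SIGMA x:X. {u\<in>X. {u,x}\<in>E})"
    then obtain x u where z: "z = (x,u)" "x \<in> X" "u \<in> X" "{u,x} \<in> E" by auto
    have "x \<noteq> u" using z(4) E2 by fastforce
    moreover have "{u,x} \<in> IE" unfolding IE_def induced_edges_def using z by auto
    ultimately show "z \<in> (\<Union>e\<in>IE. pr e)" unfolding pr_def using z(1) by blast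
  next
    fix z assume "z \<in> (\<Union>e\<in>IE. pr e)"
    then obtain e a b where e: "e \<in> IE" "z = (a,b)" "a \<in> e" "b \<in> e" "a \<noteq> b" unfolding pr_def by auto
    have eE: "e \<in> E" "e \<subseteq> X" using e(1) unfolding IE_def induced_edges_def by auto
    obtain p q where pq: "p \<noteq> q" "e = {p,q}" using two_set E2 eE by blast
    have "e = {b,a}" using pq e by auto
    thus "z \<in> (SIGMA x:X. {u\<in>X. {u,x}\<in>E})" using e eE by auto
  qed
  have finIE: "finite IE"
  proof -
    have "IE \<subseteq> Pow X" unfolding IE_def induced_edges_def by auto
    thus ?thesis using fin finite_subset by blast
  qed
  have finpr: "\<forall>e\<in>IE. finite (pr e)"
  proof
    fix e assume "e \<in> IE"
    hence "card (pr e) = 2" unfolding pr_def using pairs_card E2 unfolding IE_def induced_edges_def by auto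
    thus "finite (pr e)" by (metis card.infinite zero_neq_numeral)
  qed
  have disj: "\<forall>e1\<in>IE. \<forall>e2\<in>IE. e1 \<noteq> e2 \<longrightarrow> pr e1 \<inter> pr e2 = {}"
  proof (intro ballI impI)
    fix e1 e2 assume e: "e1 \<in> IE" "e2 \<in> IE" "e1 \<noteq> e2"
    show "pr e1 \<inter> pr e2 = {}"
    proof (rule ccontr)
      assume "pr e1 \<inter> pr e2 \<noteq> {}"
      then obtain a b where ab: "a \<in> e1" "b \<in> e1" "a \<in> e2" "b \<in> e2" "a \<noteq> b" unfolding pr_def by auto
      obtain p q where "p \<noteq> q" "e1 = {p,q}" using two_set E2 e(1) unfolding IE_def induced_edges_def by blast
      hence "e1 = {a,b}" using ab by auto
      obtain p' q' where "p' \<noteq> q'" "e2 = {p',q'}" using two_set E2 e(2) unfolding IE_def induced_edges_def by blast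
      hence "e2 = {a,b}" using ab by auto
      thus False using \<open>e1 = {a,b}\<close> e(3) by simp
    qed
  qed
  have "P E X = card (\<Union>e\<in>IE. pr e)" unfolding P_def eq ..
  also have "\<dots> = (\<Sum>e\<in>IE. card (pr e))" using card_UN_disjoint[OF finIE finpr disj] .
  also have "\<dots> = (\<Sum>e\<in>IE. 2)"
    using pairs_card E2 unfolding pr_def IE_def induced_edges_def by (intro sum.cong) auto
  finally show ?thesis unfolding IE_def by simp
qed

lemma mad_less:
  fixes V' :: "'a set" and E' :: "'a set set"
  assumes finV: "finite V'" and finE: "finite E'"
    and dens: "\<forall>W\<subseteq>V'. W \<noteq> {} \<longrightarrow> 2 * real (card (induced_edges E' W)) < c * real (card W)"
  shows "mad V' E' < ereal c"
proof -
  define I where "I = {(W, F). is_subgraph W F V' E' \<and> W \<noteq> {}}"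
  define f :: "'a set \<times> 'a set set \<Rightarrow> ereal" where "f = (\<lambda>H. ereal (2 * real (card (snd H)) / real (card (fst H))))"
  have madI: "mad V' E' = Sup (f ` I)" unfolding mad_def I_def f_def by simp
  have finI: "finite I"
  proof -
    have "I \<subseteq> Pow V' \<times> Pow E'" unfolding I_def is_subgraph_def by auto
    thus ?thesis using finV finE finite_subset by blast
  qed
  have each: "\<forall>H\<in>I. f H < ereal c"
  proof
    fix H assume "H \<in> I"
    then obtain W F where H: "H = (W,F)" "W \<subseteq> V'" "F \<subseteq> E'" "\<forall>e\<in>F. e \<subseteq> W" "W \<noteq> {}"
      unfolding I_def is_subgraph_def by auto
    have finW: "finite W" using H finV finite_subset by blast
    have cW: "real (card W) > 0" using finW H(5) card_gt_0_iff by fastforce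
    have "F \<subseteq> induced_edges E' W" unfolding induced_edges_def using H by auto
    moreover have "finite (induced_edges E' W)" unfolding induced_edges_def using finE by simp
    ultimately have "card F \<le> card (induced_edges E' W)" by (rule card_mono[rotated])
    hence "2 * real (card F) < c * real (card W)" using dens H(2) H(5)
      by (smt (verit, best) of_nat_mono)
    hence "2 * real (card F) / real (card W) < c" using cW by (simp add: divide_less_eq)
    thus "f H < ereal c" unfolding f_def H(1) by simp
  qed
  show ?thesis
  proof (cases "I = {}")
    case True
    thus ?thesis unfolding madI by (simp add: bot_ereal_def)
  next
    case False
    thus ?thesis unfolding madI using finite_Sup_less_iff[of "f ` I" "ereal c"] finI each by auto
  qed
qed



lemma induced_induced: "W \<subseteq> A \<Longrightarrow> induced_edges (induced_edges E A) W = induced_edges E W"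
  unfolding induced_edges_def by auto

theorem mainTheorem13:
  fixes V :: "'a set" and E :: "'a set set" and c\<^sub>1 :: real and k :: nat
  assumes "c\<^sub>1 > 0" and "k \<ge> 2"
    and "simple_graph V E"
    and "mad V E < ereal (c\<^sub>1 + real k)"
  shows "\<exists>A B. A \<union> B = V \<and> A \<inter> B = {}
           \<and> mad A (induced_edges E A) < ereal c\<^sub>1
           \<and> mad B (induced_edges E B) < ereal (2 * real k - 2)"
proof -
  have finV: "finite V" and E2': "\<forall>e\<in>E. e \<subseteq> V \<and> card e = 2"
    using assms(3) unfolding simple_graph_def by auto
  have E2: "\<forall>e\<in>E. card e = 2" using E2' by blast
  have finE: "finite E"
  proof -
    have "E \<subseteq> Pow V" using E2' by auto
    thus ?thesis using finV finite_subset by blast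
  qed
  have dens: "\<forall>X\<subseteq>V. X \<noteq> {} \<longrightarrow> real (P E X) < (c\<^sub>1 + real k) * real (card X)"
  proof (intro allI impI)
    fix X assume X: "X \<subseteq> V" "X \<noteq> {}"
    have finX: "finite X" using X finV finite_subset by blast
    have cX: "real (card X) > 0" using finX X card_gt_0_iff by fastforce
    have sg: "(X, induced_edges E X) \<in> {(W, F). is_subgraph W F V E \<and> W \<noteq> {}}"
      using X unfolding is_subgraph_def induced_edges_def by auto
    have "ereal (2 * real (card (snd (X, induced_edges E X))) / real (card (fst (X, induced_edges E X))))
          < ereal (c\<^sub>1 + real k)"
      using SUP_lessD[OF assms(4)[unfolded mad_def] sg] .
    hence "2 * real (card (induced_edges E X)) / real (card X) < c\<^sub>1 + real k" by simp
    hence "2 * real (card (induced_edges E X)) < (c\<^sub>1 + real k) * real (card X)"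
      using cX by (simp add: divide_less_eq)
    thus "real (P E X) < (c\<^sub>1 + real k) * real (card X)" using handshake[OF finX E2] by simp
  qed
  obtain N y where Ny: "N > 0" "orient E N y"
    "\<forall>x\<in>V. 2 * real_of_int (load y V x) < real_of_int N * (c\<^sub>1 + real k)"
    "\<forall>T. T \<subseteq> V \<longrightarrow> T \<noteq> {} \<longrightarrow> (\<exists>v\<in>T. \<forall>u\<in>T. 2 * y u v \<le> N)"
    using orient_exists[OF finV E2' dens] by blast
  define h :: "'a \<Rightarrow> int" where "h = (\<lambda>x. int k - 1)"
  have inv: "\<forall>x\<in>V. 2 * real_of_int (load y V x) < real_of_int N * (c\<^sub>1 + real_of_int (h x) + 1)"
  proof -
    have "\<And>x. c\<^sub>1 + real_of_int (h x) + 1 = c\<^sub>1 + real k" unfolding h_def by simp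
    thus ?thesis using Ny(3) by presburger
  qed
  have hge: "\<forall>x\<in>V. h x \<ge> -1" unfolding h_def by simp
  obtain A where A: "A \<subseteq> V" "\<forall>X\<subseteq>A. X \<noteq> {} \<longrightarrow> real (P E X) < c\<^sub>1 * real (card X)"
    "\<forall>Y\<subseteq>V-A. Y \<noteq> {} \<longrightarrow> (\<exists>z\<in>Y. int (dg E Y z) \<le> h z)"
    using greedy[OF Ny(2) Ny(1) E2 Ny(4) finV refl subset_refl hge inv] by blast
  define B where "B = V - A"
  define B where "B = V - A"
  have finA: "finite A" using A(1) finV finite_subset by blast
  have finB: "finite B" using finV B_def by simp
  have madA: "mad A (induced_edges E A) < ereal c\<^sub>1"
  proof (rule mad_less[OF finA])
    show "finite (induced_edges E A)" unfolding induced_edges_def using finE by simp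
    show "\<forall>W\<subseteq>A. W \<noteq> {} \<longrightarrow> 2 * real (card (induced_edges (induced_edges E A) W)) < c\<^sub>1 * real (card W)"
    proof (intro allI impI)
      fix W assume W: "W \<subseteq> A" "W \<noteq> {}"
      have finW: "finite W" using W finA finite_subset by blast
      have "2 * real (card (induced_edges E W)) = real (P E W)" using handshake[OF finW E2] by simp
      thus "2 * real (card (induced_edges (induced_edges E A) W)) < c\<^sub>1 * real (card W)"
        using A(2) W induced_induced[OF W(1)] by simp
    qed
  qed
  have degB: "\<forall>Y\<subseteq>B. Y \<noteq> {} \<longrightarrow> (\<exists>z\<in>Y. dg E Y z \<le> k - 1)"
  proof (intro allI impI)
    fix Y assume Y: "Y \<subseteq> B" "Y \<noteq> {}"
    have "Y \<subseteq> V - A" using Y(1) unfolding B_def .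
    then obtain z where "z \<in> Y" "int (dg E Y z) \<le> h z" using A(3) Y(2) by blast
    hence "int (dg E Y z) \<le> int k - 1" unfolding h_def by simp
    hence "dg E Y z \<le> k - 1" using assms(2) by arith
    thus "\<exists>z\<in>Y. dg E Y z \<le> k - 1" using \<open>z \<in> Y\<close> by blast
  qed
  have madB: "mad B (induced_edges E B) < ereal (2 * real k - 2)"
  proof (rule mad_less[OF finB])
    show "finite (induced_edges E B)" unfolding induced_edges_def using finE by simp
    show "\<forall>W\<subseteq>B. W \<noteq> {} \<longrightarrow> 2 * real (card (induced_edges (induced_edges E B) W)) < (2 * real k - 2) * real (card W)"
    proof (intro allI impI)
      fix W assume W: "W \<subseteq> B" "W \<noteq> {}"
      have finW: "finite W" using W finB finite_subset by blast
      have "card W \<noteq> 0" using finW W(2) by simp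
      hence cW: "card W \<ge> 1" by linarith
      have "P E W \<le> 2 * (k - 1) * (card W - 1)" using degen_P[OF E2 finB degB W] .
      hence "real (P E W) \<le> real (2 * (k - 1) * (card W - 1))" by (simp only: of_nat_le_iff)
      also have "real (2 * (k - 1) * (card W - 1)) = 2 * (real k - 1) * (real (card W) - 1)"
      proof -
        have k1: "real (k - 1) = real k - 1" using of_nat_diff[of 1 k] assms(2) by simp
        have w1: "real (card W - 1) = real (card W) - 1" using of_nat_diff[of 1 "card W"] cW by simp
        show ?thesis unfolding of_nat_mult k1 w1 by simp
      qed
      also have "\<dots> = (2 * real k - 2) * real (card W) - (2 * real k - 2)" by algebra
      also have "\<dots> < (2 * real k - 2) * real (card W)"
      proof -
        have "real k \<ge> 2" using assms(2) by simp
        thus ?thesis by linarith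
      qed
      finally have "real (P E W) < (2 * real k - 2) * real (card W)" .
      moreover have "2 * real (card (induced_edges E W)) = real (P E W)" using handshake[OF finW E2] by simp
      ultimately show "2 * real (card (induced_edges (induced_edges E B) W)) < (2 * real k - 2) * real (card W)"
        using induced_induced[OF W(1)] by simp
    qed
  qed
  have "A \<union> B = V" "A \<inter> B = {}" using A(1) unfolding B_def by auto
  thus ?thesis using madA madB by blast
qed

end
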